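(* Let $R$ be a GCD-domain. Let $0\leqslant n\leqslant m$, $s_0,s_1,\dots,s_n\in\operatorname{Sqf} R$ and $t_0,t_1,\dots,t_m\in\operatorname{Sqf} R$. If $$s_n^{2^n}s_{n-1}^{2^{n-1}}\cdots s_1^2s_0=t_m^{2^m}t_{m-1}^{2^{m-1}}\cdots t_1^2t_0,$$ then $s_i\sim t_i$ for $i=0,\dots,n$, and, if $m>n$, then $t_i\in R^{\ast}$ for $i=n+1,\dots,m$.
   Context: A GCD-domain is a commutative ring with identity without zero divisors in which the intersection of any two principal ideals is principal. $R^{\ast}$ denotes the set of invertible elements of $R$; $a\sim b$ means $a$ and $b$ are associated. An element $a\in R$ is square-free if it cannot be written as $a=b^2c$ with $b\in R\setminus R^{\ast}$ and $c\in R$; $\operatorname{Sqf} R$ denotes the set of square-free elements of $R$. *)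

theory Defs
  imports Main
begin

definition gcd_domain_prop :: "'a::idom itself \<Rightarrow> bool" where
  "gcd_domain_prop _ \<longleftrightarrow>
     (\<forall>a b :: 'a. \<exists>c. {x. a dvd x} \<inter> {x. b dvd x} = {x. c dvd x})"

definition Sqf :: "'a::idom set" where
  "Sqf = {a. \<not> (\<exists>b c. \<not> b dvd 1 \<and> a = b\<^sup>2 * c)}"

definition assoc :: "'a::idom \<Rightarrow> 'a \<Rightarrow> bool" where
  "assoc a b \<longleftrightarrow> (\<exists>u. u dvd 1 \<and> a = u * b)"

end

theory Submission
  imports Defs
begin

lemma unit_mult: "(a::'a::idom) dvd 1 \<Longrightarrow> b dvd 1 \<Longrightarrow> a * b dvd 1"
  using mult_dvd_mono[of a 1 b 1] by simp

lemma sqf_nz: "(a::'a::idom) \<in> Sqf \<Longrightarrow> a \<noteq> 0"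
  unfolding Sqf_def by (auto dest: spec[of _ 0])

lemma sqf_unit: assumes "(a::'a::idom) \<in> Sqf" "u dvd 1" shows "u * a \<in> Sqf"
proof -
  obtain v where v: "u * v = 1" using assms(2) by (metis dvdE)
  show ?thesis unfolding Sqf_def
  proof (clarify)
    fix b c assume nb: "\<not> b dvd 1" and e: "u * a = b\<^sup>2 * c"
    have "a = b\<^sup>2 * (v * c)"
    proof -
      have "a = v * (u * a)" using v by (simp add: algebra_simps)
      also have "\<dots> = b\<^sup>2 * (v * c)" using e by (simp add: algebra_simps)
      finally show ?thesis .
    qed
    with assms(1) nb show False unfolding Sqf_def by blast
  qed
qed

lemma gcd_ex:
  assumes G: "gcd_domain_prop TYPE('a::idom)" and an: "(a::'a) \<noteq> 0" and bn: "b \<noteq> 0"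
  shows "\<exists>g. g dvd a \<and> g dvd b \<and> (\<forall>e. e dvd a \<longrightarrow> e dvd b \<longrightarrow> e dvd g)"
proof -
  from G obtain l where L: "{x. a dvd x} \<inter> {x. b dvd x} = {x. l dvd x}"
    unfolding gcd_domain_prop_def by blast
  have Lx: "(a dvd x \<and> b dvd x) = (l dvd x)" for x
  proof -
    have "(x \<in> {x. a dvd x} \<inter> {x. b dvd x}) = (x \<in> {x. l dvd x})" using L by simp
    then show ?thesis by simp
  qed
  have al: "a dvd l" and bl: "b dvd l" using Lx[of l] by auto
  have "l dvd a*b" using Lx[of "a*b"] by auto
  then obtain g where g: "a*b = l*g" by (auto elim!: dvdE)
  have ln: "l \<noteq> 0" using g an bn by auto
  from al obtain k where k: "l = a*k" by (auto elim!: dvdE)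
  from bl obtain k' where k': "l = b*k'" by (auto elim!: dvdE)
  have "a * b = a * (k*g)" using g k by (simp add: algebra_simps)
  then have "b = k*g" using an by simp
  then have gb: "g dvd b" by simp
  have "b * a = b * (k'*g)" using g k' by (simp add: algebra_simps)
  then have "a = k'*g" using bn by simp
  then have ga: "g dvd a" by simp
  have "e dvd g" if ea: "e dvd a" and eb: "e dvd b" for e
  proof -
    obtain a1 where a1: "a = e*a1" using ea by (auto elim!: dvdE)
    obtain b1 where b1: "b = e*b1" using eb by (auto elim!: dvdE)
    have "a dvd e*a1*b1" using a1 by simp
    moreover have "b dvd e*a1*b1" using b1 by (simp add: algebra_simps)
    ultimately have "l dvd e*a1*b1" using Lx by blast
    then obtain h where h: "e*a1*b1 = l*h" by (auto elim!: dvdE)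
    have "l*g = l*(e*h)"
    proof -
      have "l*g = e*(e*a1*b1)" using g a1 b1 by (simp add: algebra_simps)
      also have "\<dots> = l*(e*h)" using h by (simp add: algebra_simps)
      finally show ?thesis .
    qed
    then have "g = e*h" using ln by simp
    then show ?thesis by simp
  qed
  then show ?thesis using ga gb by blast
qed

lemma euclid:
  assumes G: "gcd_domain_prop TYPE('a::idom)"
    and cp: "\<forall>e. e dvd x \<longrightarrow> e dvd y \<longrightarrow> e dvd (1::'a)"
    and d: "x dvd y*z"
  shows "x dvd z"
proof (cases "z = 0 \<or> y = 0")
  case True
  then show ?thesis
  proof
    assume "z = 0" then show ?thesis by simp
  next
    assume "y = 0"
    then have "x dvd 1" using cp by auto
    then show ?thesis by (meson dvd_trans one_dvd)
  qed
next
  case False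
  then have zn: "z \<noteq> 0" and yn: "y \<noteq> 0" by auto
  have xn: "x \<noteq> 0" using d zn yn by auto
  obtain Gc where Gc: "Gc dvd x*z" "Gc dvd y*z" "\<forall>e. e dvd x*z \<longrightarrow> e dvd y*z \<longrightarrow> e dvd Gc"
    using gcd_ex[OF G, of "x*z" "y*z"] xn yn zn by auto
  have xG: "x dvd Gc" using Gc(3) d by auto
  have "z dvd Gc" using Gc(3) by auto
  then obtain G' where G': "Gc = z*G'" by (auto elim!: dvdE)
  have "G' dvd x" using Gc(1) G' zn by simp
  moreover have "G' dvd y" using Gc(2) G' zn by (simp add: mult.commute)
  ultimately have "G' dvd 1" using cp by auto
  then have "z*G' dvd z*1" by (rule mult_dvd_mono[OF dvd_refl])
  then have "Gc dvd z" using G' by simp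
  then show ?thesis using xG by (rule dvd_trans[rotated])
qed

lemma unit_of_sq:
  assumes G: "gcd_domain_prop TYPE('a::idom)"
    and cp: "\<forall>e. e dvd x \<longrightarrow> e dvd y \<longrightarrow> e dvd (1::'a)"
    and eq: "x^2*b = y^2*d" and ds: "d \<in> Sqf" and xn: "x \<noteq> 0"
  shows "x dvd 1"
proof -
  have "x dvd y*(y*d)" using eq by (metis dvd_triv_left mult.assoc power2_eq_square)
  then have "x dvd y*d" using euclid[OF G cp] by blast
  then have "x dvd d" using euclid[OF G cp] by blast
  then obtain d1 where d1: "d = x*d1" by (auto elim!: dvdE)
  have "x * (x*b) = x * (y^2*d1)" using eq d1 by (simp add: algebra_simps power2_eq_square)
  then have "x*b = y*(y*d1)" using xn by (simp add: power2_eq_square)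
  then have "x dvd y*(y*d1)" by (metis dvd_triv_left)
  then have "x dvd y*d1" using euclid[OF G cp] by blast
  then have "x dvd d1" using euclid[OF G cp] by blast
  then obtain d2 where "d1 = x*d2" by (auto elim!: dvdE)
  then have "d = x^2*d2" using d1 by (simp add: power2_eq_square)
  then show ?thesis using ds unfolding Sqf_def by blast
qed

lemma key:
  assumes G: "gcd_domain_prop TYPE('a::idom)"
    and bs: "b \<in> Sqf" and ds: "d \<in> Sqf" and an: "(a::'a) \<noteq> 0"
    and eq: "a^2*b = c^2*d"
  shows "assoc a c \<and> assoc b d"
proof -
  have bn: "b \<noteq> 0" using sqf_nz[OF bs] .
  have cn: "c \<noteq> 0" using eq an bn by auto
  obtain g where g: "g dvd a" "g dvd c" "\<forall>e. e dvd a \<longrightarrow> e dvd c \<longrightarrow> e dvd g"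
    using gcd_ex[OF G an cn] by auto
  obtain a' where a': "a = g*a'" using g(1) by (auto elim!: dvdE)
  obtain c' where c': "c = g*c'" using g(2) by (auto elim!: dvdE)
  have gn: "g \<noteq> 0" using a' an by auto
  have an': "a' \<noteq> 0" using a' an by auto
  have cn': "c' \<noteq> 0" using c' cn by auto
  have cp: "\<forall>e. e dvd a' \<longrightarrow> e dvd c' \<longrightarrow> e dvd 1"
  proof (intro allI impI)
    fix e assume "e dvd a'" "e dvd c'"
    then have "g*e dvd a" "g*e dvd c" using a' c' by auto
    then have "g*e dvd g*1" using g(3) by simp
    then show "e dvd 1" using gn by simp
  qed
  have cp': "\<forall>e. e dvd c' \<longrightarrow> e dvd a' \<longrightarrow> e dvd 1" using cp by blast
  have "g^2 * (a'^2*b) = g^2 * (c'^2*d)" using eq a' c' by (simp add: algebra_simps power2_eq_square)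
  then have eq': "a'^2*b = c'^2*d" using gn by simp
  have ua: "a' dvd 1" using unit_of_sq[OF G cp eq' ds an'] .
  have uc: "c' dvd 1" using unit_of_sq[OF G cp' eq'[symmetric] bs cn'] .
  obtain ai where ai: "a'*ai = 1" using ua by (metis dvdE)
  obtain ci where ci: "c'*ci = 1" using uc by (metis dvdE)
  have "a = g*a'*(c'*ci)" using a' ci by simp
  also have "\<dots> = (a'*ci)*c" using c' by (simp add: algebra_simps)
  finally have "a = (a'*ci)*c" .
  moreover have "a'*ci dvd 1"
  proof -
    have "ci dvd 1" using ci dvd_triv_right[of ci c'] by simp
    then show ?thesis using ua by (simp add: unit_mult)
  qed
  ultimately have A: "assoc a c" unfolding assoc_def by blast
  have "b = (ai^2*c'^2)*d"
  proof -
    have "ai^2 * (a'^2*b) = (a'*ai)*(a'*ai)*b" by (simp add: algebra_simps power2_eq_square)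
    then have "b = ai^2 * (a'^2*b)" using ai by simp
    also have "\<dots> = (ai^2*c'^2)*d" using eq' by (simp add: algebra_simps)
    finally show ?thesis .
  qed
  moreover have "ai^2*c'^2 dvd 1"
  proof -
    have "ai dvd 1" using ai dvd_triv_right[of ai a'] by simp
    then show ?thesis using uc by (simp add: power2_eq_square unit_mult)
  qed
  ultimately have "assoc b d" unfolding assoc_def by blast
  with A show ?thesis by blast
qed

lemma decomp:
  "(\<Prod>i\<le>n. f i ^ (2^i)) = (f 0::'a::comm_semiring_1) * (\<Prod>i<n. f (Suc i) ^ (2^i))^2"
proof (cases n)
  case 0 then show ?thesis by simp
next
  case (Suc k)
  have "(\<Prod>i\<le>n. f i ^ (2^i)) = f 0 * (\<Prod>i\<le>k. f (Suc i) ^ (2^Suc i))"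
    unfolding Suc by (subst prod.atMost_Suc_shift) (simp only: power_0 power_one_right)
  also have "(\<Prod>i\<le>k. f (Suc i) ^ (2^Suc i)) = (\<Prod>i\<le>k. (f (Suc i) ^ (2^i))^2)"
    by (intro prod.cong refl) (simp add: power_mult[symmetric] mult.commute)
  also have "\<dots> = (\<Prod>i<n. f (Suc i) ^ (2^i))^2"
    by (simp only: Suc lessThan_Suc_atMost prod_power_distrib)
  finally show ?thesis .
qed

lemma shift_unit:
  "(\<Prod>i\<le>m. (if i = 0 then u * g 0 else g i) ^ (2^i)) = (u::'a::comm_monoid_mult) * (\<Prod>i\<le>m. g i ^ (2^i))"
  by (induction m) (simp_all add: mult.assoc)

lemma assoc_unit: assumes "assoc a (u*b)" "u dvd 1" shows "assoc a b"
proof -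
  obtain v where v: "v dvd 1" "a = v*(u*b)" using assms(1) unfolding assoc_def by blast
  have "v*u dvd 1" using v(1) assms(2) by (simp add: unit_mult)
  then show ?thesis unfolding assoc_def using v(2) by (metis mult.assoc)
qed

lemma main:
  assumes G: "gcd_domain_prop TYPE('a::idom)"
  shows "\<forall>m (s::nat \<Rightarrow> 'a) t. n \<le> m \<longrightarrow> (\<forall>i\<le>n. s i \<in> Sqf) \<longrightarrow> (\<forall>i\<le>m. t i \<in> Sqf) \<longrightarrow>
     (\<Prod>i\<le>n. s i ^ (2 ^ i)) = (\<Prod>i\<le>m. t i ^ (2 ^ i)) \<longrightarrow>
     (\<forall>i\<le>n. assoc (s i) (t i)) \<and> (m > n \<longrightarrow> (\<forall>i\<in>{n<..m}. t i dvd 1))"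
proof (induction n)
  case 0
  show ?case
  proof (intro allI impI)
    fix m and s t :: "nat \<Rightarrow> 'a"
    assume ss: "\<forall>i\<le>0. s i \<in> Sqf" and ts: "\<forall>i\<le>m. t i \<in> Sqf"
      and eq: "(\<Prod>i\<le>0. s i ^ (2 ^ i)) = (\<Prod>i\<le>m. t i ^ (2 ^ i))"
    define Y where "Y = (\<Prod>i<m. t (Suc i) ^ (2^i))"
    have "s 0 = t 0 * Y^2" using eq decomp[where n=m and f=t] Y_def by simp
    then have "1^2 * s 0 = Y^2 * t 0" by (simp add: mult.commute)
    from key[OF G _ _ _ this] ss ts have K: "assoc 1 Y" "assoc (s 0) (t 0)" by auto
    have Yu: "Y dvd 1" using K(1) unfolding assoc_def by (metis dvd_triv_right)
    have "t i dvd 1" if im: "i \<in> {0<..m}" for i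
    proof -
      obtain j where j: "i = Suc j" "j < m" using im by (cases i) auto
      have "t i dvd t (Suc j) ^ (2^j)" using j by (simp add: dvd_power)
      also have "\<dots> dvd Y" unfolding Y_def using j by (intro dvd_prodI) auto
      finally show ?thesis using Yu by (rule dvd_trans)
    qed
    then show "(\<forall>i\<le>0. assoc (s i) (t i)) \<and> (m > 0 \<longrightarrow> (\<forall>i\<in>{0<..m}. t i dvd 1))"
      using K(2) by auto
  qed
next
  case (Suc k)
  show ?case
  proof (intro allI impI)
    fix m and s t :: "nat \<Rightarrow> 'a"
    assume le: "Suc k \<le> m" and ss: "\<forall>i\<le>Suc k. s i \<in> Sqf" and ts: "\<forall>i\<le>m. t i \<in> Sqf"
      and eq: "(\<Prod>i\<le>Suc k. s i ^ (2 ^ i)) = (\<Prod>i\<le>m. t i ^ (2 ^ i))"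
    obtain m' where m': "m = Suc m'" using le by (cases m) auto
    define X where "X = (\<Prod>i<Suc k. s (Suc i) ^ (2^i))"
    define Y where "Y = (\<Prod>i<m. t (Suc i) ^ (2^i))"
    have "s 0 * X^2 = t 0 * Y^2" using eq decomp[where n=m and f=t] decomp[where n="Suc k" and f=s] X_def Y_def by simp
    then have e2: "X^2 * s 0 = Y^2 * t 0" by (simp add: mult.commute)
    have Xn: "X \<noteq> 0" unfolding X_def using ss sqf_nz by (auto simp: prod_zero_iff)
    from key[OF G _ _ Xn e2] ss ts have K: "assoc X Y" "assoc (s 0) (t 0)" by auto
    obtain u where u: "u dvd 1" "X = u*Y" using K(1) unfolding assoc_def by blast
    define s' where "s' = (\<lambda>i. s (Suc i))"
    define t' where "t' = (\<lambda>i. if i = 0 then u * t (Suc 0) else t (Suc i))"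
    have eq': "(\<Prod>i\<le>k. s' i ^ (2 ^ i)) = (\<Prod>i\<le>m'. t' i ^ (2 ^ i))"
    proof -
      have "(\<Prod>i\<le>k. s' i ^ (2 ^ i)) = X" unfolding X_def s'_def by (simp add: lessThan_Suc_atMost)
      also have "\<dots> = u * (\<Prod>i\<le>m'. t (Suc i) ^ (2^i))" using u(2) Y_def m' by (simp add: lessThan_Suc_atMost)
      also have "\<dots> = (\<Prod>i\<le>m'. t' i ^ (2 ^ i))" unfolding t'_def
        using shift_unit[where m=m' and u=u and g="\<lambda>i. t (Suc i)"] by simp
      finally show ?thesis .
    qed
    have ss': "\<forall>i\<le>k. s' i \<in> Sqf" using ss s'_def by auto
    have ts': "\<forall>i\<le>m'. t' i \<in> Sqf" using ts t'_def sqf_unit[OF _ u(1)] m' by auto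
    have IH: "(\<forall>i\<le>k. assoc (s' i) (t' i)) \<and> (m' > k \<longrightarrow> (\<forall>i\<in>{k<..m'}. t' i dvd 1))"
      using Suc.IH le m' ss' ts' eq' by auto
    have A: "assoc (s i) (t i)" if "i \<le> Suc k" for i
    proof (cases i)
      case 0 then show ?thesis using K(2) by simp
    next
      case (Suc j)
      then have "assoc (s' j) (t' j)" using IH that by auto
      then show ?thesis using Suc s'_def t'_def assoc_unit[OF _ u(1)] by (cases j) auto
    qed
    have B: "t i dvd 1" if im: "i \<in> {Suc k<..m}" for i
    proof -
      obtain j where j: "i = Suc j" using im by (cases i) auto
      have "j \<in> {k<..m'}" using im j m' by auto
      then have "t' j dvd 1" using IH by auto
      then show ?thesis using j t'_def \<open>j \<in> {k<..m'}\<close> by auto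
    qed
    show "(\<forall>i\<le>Suc k. assoc (s i) (t i)) \<and> (m > Suc k \<longrightarrow> (\<forall>i\<in>{Suc k<..m}. t i dvd 1))"
      using A B by blast
  qed
qed

theorem proposition2:
  fixes s t :: "nat \<Rightarrow> 'a::idom" and n m :: nat
  assumes "gcd_domain_prop TYPE('a)"
    and "n \<le> m"
    and "\<forall>i\<le>n. s i \<in> Sqf"
    and "\<forall>i\<le>m. t i \<in> Sqf"
    and "(\<Prod>i\<le>n. s i ^ (2 ^ i)) = (\<Prod>i\<le>m. t i ^ (2 ^ i))"
  shows "(\<forall>i\<le>n. assoc (s i) (t i)) \<and> (m > n \<longrightarrow> (\<forall>i\<in>{n<..m}. t i dvd 1))"
  using main[OF assms(1), of n] assms(2-5) by blast

end
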